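(* Let $(\mathcal{L},[\cdot,\cdot],\alpha)$ be a Hom-Lie algebra. For all $a(w),b(w),c(w)\in\mathcal{L}[[w,w^{-1}]]$ and $m,n\in\mathbb{Z}_{\ge0}$, the $j$-products satisfy: (1) $(\partial a)_{(n)}b=-n\,a_{(n-1)}b$ and $a_{(n)}(\partial b)=\partial(a_{(n)}b)+n\,a_{(n-1)}b$; (2) if $(a,b)$ is a local pair, then $a_{(n)}b=-\sum_{i\ge0}(-1)^{n+i}\frac{1}{i!}\partial^i(b_{(n+i)}a)$; (3) $\alpha(a)_{(m)}(b_{(n)}c)=\alpha(b)_{(n)}(a_{(m)}c)+\sum_{i=0}^m\binom{m}{i}(a_{(i)}b)_{(m+n-i)}\alpha(c)$.
   Context: A Hom-Lie algebra is a complex vector space $\mathcal{L}$ with a bilinear map $[\cdot,\cdot]$ and linear map $\alpha$ with $[x,y]=-[y,x]$ and $[[x,y],\alpha(z)]+[[y,z],\alpha(x)]+[[z,x],\alpha(y)]=0$. For $a(z)=\sum_{m\in\mathbb{Z}}a_{(m)}z^{-m-1}$ and $b(w)=\sum_n b_{(n)}w^{-n-1}$, set $[a(z),b(w)]=\sum_{m,n}[a_{(m)},b_{(n)}]z^{-m-1}w^{-n-1}$. This is local if $(z-w)^N[a(z),b(w)]=0$ for some positive integer $N$, and then $(a,b)$ is called a local pair. For $j\in\mathbb{Z}_{\ge0}$ the $j$-product is $a_{(j)}b=\mathrm{Res}_z\,(z-w)^j[a(z),b(w)]\in\mathcal{L}[[w,w^{-1}]]$, where $\mathrm{Res}_z$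 takes the coefficient of $z^{-1}$. The operator $\partial$ acts by $(\partial a)(w)=\partial_w a(w)$, and $\alpha$ acts by $\alpha(a)(w)=\sum_m\alpha(a_{(m)})w^{-m-1}$. Terms with factor $n$ and index $n-1$ are zero when $n=0$. *)

theory Defs
  imports Main "HOL.Complex" "HOL-Library.Groups_Big_Fun"
begin

text \<open>A formal distribution a(w) = sum_m a_(m) w^(-m-1) is represented by its
  coefficient function m |-> a_(m) :: int => 'a.
  A two-variable distribution F(z,w) = sum_{m,n} F m n z^(-m-1) w^(-n-1)
  is represented by F :: int => int => 'a.\<close>

definition hom_lie :: "(complex \<Rightarrow> 'a::ab_group_add \<Rightarrow> 'a) \<Rightarrow> ('a \<Rightarrow> 'a \<Rightarrow> 'a) \<Rightarrow> ('a \<Rightarrow> 'a) \<Rightarrow> bool" where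
  "hom_lie s br al \<longleftrightarrow>
     vector_space s \<and>
     (\<forall>x. Vector_Spaces.linear s s (br x)) \<and>
     (\<forall>y. Vector_Spaces.linear s s (\<lambda>x. br x y)) \<and>
     Vector_Spaces.linear s s al \<and>
     (\<forall>x y. br x y = - br y x) \<and>
     (\<forall>x y z. br (br x y) (al z) + br (br y z) (al x) + br (br z x) (al y) = 0)"

definition bracket2 :: "('a \<Rightarrow> 'a \<Rightarrow> 'a) \<Rightarrow> (int \<Rightarrow> 'a) \<Rightarrow> (int \<Rightarrow> 'a) \<Rightarrow> int \<Rightarrow> int \<Rightarrow> 'a" where
  "bracket2 br a b = (\<lambda>m n. br (a m) (b n))"

text \<open>Multiplication of a two-variable distribution by (z-w)^N:
  (z-w)^N = sum_{k=0}^N binom(N,k) (-1)^k z^(N-k) w^k.\<close>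
definition zw_mult :: "(complex \<Rightarrow> 'a::ab_group_add \<Rightarrow> 'a) \<Rightarrow> nat \<Rightarrow> (int \<Rightarrow> int \<Rightarrow> 'a) \<Rightarrow> int \<Rightarrow> int \<Rightarrow> 'a" where
  "zw_mult s N F = (\<lambda>m n. \<Sum>k\<le>N. s (of_int ((-1) ^ k * int (N choose k))) (F (m + int N - int k) (n + int k)))"

definition local_pair :: "(complex \<Rightarrow> 'a::ab_group_add \<Rightarrow> 'a) \<Rightarrow> ('a \<Rightarrow> 'a \<Rightarrow> 'a) \<Rightarrow> (int \<Rightarrow> 'a) \<Rightarrow> (int \<Rightarrow> 'a) \<Rightarrow> bool" where
  "local_pair s br a b \<longleftrightarrow> (\<exists>N>0. zw_mult s N (bracket2 br a b) = (\<lambda>m n. 0))"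

text \<open>j-product: a_(j) b = Res_z (z-w)^j [a(z),b(w)], i.e. the coefficient of z^(-1) (index m = 0).\<close>
definition jprod :: "(complex \<Rightarrow> 'a::ab_group_add \<Rightarrow> 'a) \<Rightarrow> ('a \<Rightarrow> 'a \<Rightarrow> 'a) \<Rightarrow> nat \<Rightarrow> (int \<Rightarrow> 'a) \<Rightarrow> (int \<Rightarrow> 'a) \<Rightarrow> int \<Rightarrow> 'a" where
  "jprod s br j a b = (\<lambda>n. zw_mult s j (bracket2 br a b) 0 n)"

text \<open>Derivative: d/dw sum_m a_(m) w^(-m-1) = sum_k (-k) a_(k-1) w^(-k-1).\<close>
definition dderiv :: "(complex \<Rightarrow> 'a \<Rightarrow> 'a) \<Rightarrow> (int \<Rightarrow> 'a) \<Rightarrow> int \<Rightarrow> 'a" where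
  "dderiv s a = (\<lambda>k. s (of_int (- k)) (a (k - 1)))"

definition amap :: "('a \<Rightarrow> 'a) \<Rightarrow> (int \<Rightarrow> 'a) \<Rightarrow> int \<Rightarrow> 'a" where
  "amap al a = (\<lambda>k. al (a k))"

end

theory Submission
  imports Defs "HOL-Library.Poly_Mapping" "HOL-Library.Product_Plus"
begin

definition ev :: "(complex \<Rightarrow> 'a::ab_group_add \<Rightarrow> 'a) \<Rightarrow> ('k \<Rightarrow>\<^sub>0 complex) \<Rightarrow> ('k \<Rightarrow> 'a) \<Rightarrow> 'a" where
  "ev s P G = (\<Sum>k\<in>Poly_Mapping.keys P. s (Poly_Mapping.lookup P k) (G k))"

definition cf :: "nat \<Rightarrow> nat \<Rightarrow> int" where "cf N k = (-1)^k * int (N choose k)"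

lemma binom_diff: "((X::'r::comm_ring_1) - Y)^N = (\<Sum>k\<le>N. of_int ((-1)^k * int (N choose k)) * X^(N-k) * Y^k)"
proof -
  have "(X - Y)^N = (-Y + X)^N" by simp
  also have "\<dots> = (\<Sum>k\<le>N. of_nat (N choose k) * (-Y)^k * X^(N-k))" by (rule binomial_ring)
  also have "\<dots> = (\<Sum>k\<le>N. of_int ((-1)^k * int (N choose k)) * X^(N-k) * Y^k)"
  proof (rule sum.cong)
    fix k assume "k \<in> {..N}"
    have "of_int ((-1)^k * int (N choose k)) = ((-1)^k * of_nat (N choose k) :: 'r)" by simp
    then show "of_nat (N choose k) * (-Y)^k * X^(N-k) = of_int ((-1)^k * int (N choose k)) * X^(N-k) * Y^k"
      by (simp only: power_minus[of Y k] mult_ac)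
  qed simp
  finally show ?thesis .
qed

lemma binom_diff_cf: "((X::'r::comm_ring_1) - Y)^N = (\<Sum>k\<le>N. of_int (cf N k) * (X^(N-k) * Y^k))"
  unfolding cf_def by (simp add: binom_diff mult.assoc)

lemma single_pow2: "Poly_Mapping.single (u::int, v::int) (1::complex) ^ n = Poly_Mapping.single (int n * u, int n * v) 1"
  by (induction n) (auto simp: mult_single algebra_simps zero_prod_def[symmetric])

lemma single_pow3: "Poly_Mapping.single (u::int, v::int, w::int) (1::complex) ^ n = Poly_Mapping.single (int n * u, int n * v, int n * w) 1"
  by (induction n) (auto simp: mult_single algebra_simps zero_prod_def[symmetric])

lemma cf_absorb: "j \<le> n \<Longrightarrow> cf (Suc n) j * (int (Suc n) - int j) = int (Suc n) * cf n j"
proof -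
  assume "j \<le> n"
  have "int (Suc n - j) * int (Suc n choose j) = int (Suc n) * int (n choose j)"
    using binomial_absorb_comp[of "Suc n" j] by (metis of_nat_mult diff_Suc_1)
  moreover have "int (Suc n - j) = int (Suc n) - int j" using \<open>j \<le> n\<close> by simp
  ultimately show ?thesis by (simp add: cf_def algebra_simps)
qed

lemma cf_shift: "cf n (Suc i) * (- int (Suc i)) = int n * cf (n - 1) i"
proof -
  have "int (Suc i) * int (n choose Suc i) = int n * int ((n - 1) choose i)"
    using binomial_absorption[of i n] by (metis of_nat_mult)
  then have "(-1)^i * (int (Suc i) * int (n choose Suc i)) = (-1)^i * (int n * int ((n - 1) choose i))" by simp
  then show ?thesis by (simp add: cf_def algebra_simps)
qed

abbreviation Z2 :: "(int \<times> int) \<Rightarrow>\<^sub>0 complex" where "Z2 \<equiv> Poly_Mapping.single (1,0) 1"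
abbreviation W2 :: "(int \<times> int) \<Rightarrow>\<^sub>0 complex" where "W2 \<equiv> Poly_Mapping.single (0,1) 1"
abbreviation M2 :: "int \<Rightarrow> int \<Rightarrow> (int \<times> int) \<Rightarrow>\<^sub>0 complex" where "M2 u v \<equiv> Poly_Mapping.single (u,v) 1"

definition Sg :: "nat \<Rightarrow> int \<Rightarrow> (int \<times> int) \<Rightarrow>\<^sub>0 complex" where
  "Sg M p = (\<Sum>i<M. Poly_Mapping.single 0 ((of_int p :: complex) gchoose i) * (W2 - Z2)^i * M2 (p - int i) 0)"

definition Eg :: "nat \<Rightarrow> int \<Rightarrow> (int \<times> int) \<Rightarrow>\<^sub>0 complex" where
  "Eg M p = (if M = 0 then 0 else Poly_Mapping.single 0 ((of_int (p - 1) :: complex) gchoose (M - 1)) * M2 (p - int M) 0)"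

lemma Eg_key: "(W2 - Z2)^M * Eg M p + Poly_Mapping.single 0 ((of_int (p - 1) :: complex) gchoose M) * (W2 - Z2)^M * M2 (p - int M) 0
   = Poly_Mapping.single 0 ((of_int p :: complex) gchoose M) * (W2 - Z2)^M * M2 (p - int M) 0"
proof (cases M)
  case 0 then show ?thesis by (simp add: Eg_def)
next
  case (Suc M')
  have pas: "(of_int p :: complex) gchoose Suc M' = (of_int (p - 1) gchoose M') + (of_int (p - 1) gchoose Suc M')"
    using gbinomial_Suc_Suc[of "of_int (p - 1) :: complex" M'] by simp
  have "(W2 - Z2)^M * Eg M p + Poly_Mapping.single 0 ((of_int (p - 1) :: complex) gchoose M) * (W2 - Z2)^M * M2 (p - int M) 0
     = (Poly_Mapping.single 0 ((of_int (p - 1) :: complex) gchoose M') + Poly_Mapping.single 0 ((of_int (p - 1) :: complex) gchoose M)) * (W2 - Z2)^M * M2 (p - int M) 0"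
    using Suc by (simp add: Eg_def algebra_simps)
  also have "\<dots> = Poly_Mapping.single 0 ((of_int p :: complex) gchoose M) * (W2 - Z2)^M * M2 (p - int M) 0"
    by (simp only: single_add[symmetric] pas Suc)
  finally show ?thesis .
qed

lemma Sg_rec: "W2 * Sg M (p - 1) = Sg M p + (W2 - Z2)^M * Eg M p"
proof (induction M)
  case 0 then show ?case by (simp add: Sg_def Eg_def)
next
  case (Suc M)
  define D where "D = W2 - Z2"
  define A where "A = Poly_Mapping.single (0::int\<times>int) ((of_int (p - 1) :: complex) gchoose M)"
  have S1: "Sg (Suc M) q = Sg M q + Poly_Mapping.single 0 ((of_int q :: complex) gchoose M) * (W2 - Z2)^M * M2 (q - int M) 0" for q
    by (simp add: Sg_def)
  have Zm: "Z2 * M2 (p - 1 - int M) 0 = M2 (p - int M) 0" by (simp add: mult_single)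
  have Wm2: "W2 * M2 (p - 1 - int M) 0 = Z2 * M2 (p - 1 - int M) 0 + D * M2 (p - 1 - int M) 0"
    by (simp only: D_def distrib_right[symmetric]) simp
  have "W2 * Sg (Suc M) (p - 1) = W2 * Sg M (p - 1) + A * D^M * (W2 * M2 (p - 1 - int M) 0)"
    unfolding S1 by (simp add: A_def D_def algebra_simps)
  also have "\<dots> = Sg M p + D^M * Eg M p + A * D^M * (Z2 * M2 (p - 1 - int M) 0) + A * D^M * (D * M2 (p - 1 - int M) 0)"
    unfolding Suc.IH D_def[symmetric] Wm2 by (simp add: algebra_simps)
  also have "\<dots> = Sg M p + (D^M * Eg M p + A * D^M * M2 (p - int M) 0) + D^(Suc M) * (A * M2 (p - int (Suc M)) 0)"
    unfolding Zm by (simp add: algebra_simps)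
  also have "\<dots> = Sg (Suc M) p + D^(Suc M) * Eg (Suc M) p"
    unfolding D_def A_def Eg_key S1 by (simp add: Eg_def)
  finally show ?case by (simp add: D_def)
qed

lemma taylor: "\<exists>R. M2 0 p - Sg M p = (W2 - Z2)^M * R"
proof (induction p rule: int_induct[where k=0])
  case base
  show ?case
  proof (cases M)
    case 0 then show ?thesis by (simp add: Sg_def)
  next
    case (Suc M')
    have "Sg M 0 = 1"
      unfolding Sg_def Suc lessThan_Suc_eq_insert_0 by (simp add: sum.reindex zero_prod_def[symmetric])
    then show ?thesis by (intro exI[of _ 0]) (simp add: zero_prod_def[symmetric])
  qed
next
  case (step1 i)
  then obtain R where R: "M2 0 i - Sg M i = (W2 - Z2)^M * R" by blast
  have "M2 0 (i + 1) - Sg M (i + 1) = W2 * (M2 0 i - Sg M i) + (W2 - Z2)^M * Eg M (i + 1)"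
    using Sg_rec[of M "i + 1"] by (simp add: mult_single algebra_simps)
  also have "\<dots> = (W2 - Z2)^M * (W2 * R + Eg M (i + 1))" unfolding R by (simp add: algebra_simps)
  finally show ?case by blast
next
  case (step2 i)
  then obtain R where R: "M2 0 i - Sg M i = (W2 - Z2)^M * R" by blast
  have inv: "M2 0 (-1) * W2 = 1" by (simp add: mult_single zero_prod_def[symmetric])
  have "W2 * (M2 0 (i - 1) - Sg M (i - 1)) = M2 0 i - Sg M i - (W2 - Z2)^M * Eg M i"
    using Sg_rec[of M i] by (simp add: mult_single algebra_simps)
  also have "\<dots> = (W2 - Z2)^M * (R - Eg M i)"
    unfolding R by (simp add: right_diff_distrib)
  finally have "M2 0 (-1) * (W2 * (M2 0 (i - 1) - Sg M (i - 1))) = M2 0 (-1) * ((W2 - Z2)^M * (R - Eg M i))"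
    by simp
  then have "M2 0 (i - 1) - Sg M (i - 1) = (W2 - Z2)^M * (M2 0 (-1) * (R - Eg M i))"
    by (simp only: mult.assoc[symmetric] inv mult_1_left) (simp add: algebra_simps)
  then show ?case by blast
qed

abbreviation M3 :: "int \<Rightarrow> int \<Rightarrow> int \<Rightarrow> (int \<times> int \<times> int) \<Rightarrow>\<^sub>0 complex" where "M3 u v t \<equiv> Poly_Mapping.single (u,v,t) 1"

lemma poly3_T1: "(M3 1 0 0 - M3 0 0 1)^m * (M3 0 1 0 - M3 0 0 1)^n * M3 0 0 k =
  (\<Sum>p\<le>m. \<Sum>q\<le>n. Poly_Mapping.single (int m - int p, int n - int q, k + int p + int q) (of_int (cf m p * cf n q)))"
proof -
  have "(M3 1 0 0 - M3 0 0 1)^m * (M3 0 1 0 - M3 0 0 1)^n * M3 0 0 k =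
     (\<Sum>p\<le>m. \<Sum>q\<le>n. of_int (cf m p) * (M3 1 0 0 ^ (m-p) * M3 0 0 1 ^ p) * (of_int (cf n q) * (M3 0 1 0 ^ (n-q) * M3 0 0 1 ^ q)) * M3 0 0 k)"
    unfolding binom_diff_cf sum_product by (simp only: sum_distrib_right)
  also have "\<dots> = (\<Sum>p\<le>m. \<Sum>q\<le>n. Poly_Mapping.single (int m - int p, int n - int q, k + int p + int q) (of_int (cf m p * cf n q)))"
    by (intro sum.cong refl) (simp add: single_pow3 mult_single of_nat_diff algebra_simps flip: single_of_int)
  finally show ?thesis .
qed

lemma poly_id: "((Z::'r::comm_ring_1) - W)^m * (X - W)^n = (\<Sum>i\<le>m. of_nat (m choose i) * (Z - X)^i * (X - W)^(m + n - i))"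
proof -
  have "(Z - W)^m = ((Z - X) + (X - W))^m" by simp
  also have "\<dots> = (\<Sum>i\<le>m. of_nat (m choose i) * (Z - X)^i * (X - W)^(m - i))" by (rule binomial_ring)
  finally have "(Z - W)^m * (X - W)^n = (\<Sum>i\<le>m. of_nat (m choose i) * (Z - X)^i * (X - W)^(m - i)) * (X - W)^n" by simp
  also have "\<dots> = (\<Sum>i\<le>m. of_nat (m choose i) * (Z - X)^i * (X - W)^(m + n - i))"
    unfolding sum_distrib_right
  proof (rule sum.cong)
    fix i assume "i \<in> {..m}"
    then have "m + n - i = (m - i) + n" by simp
    then show "of_nat (m choose i) * (Z - X)^i * (X - W)^(m - i) * (X - W)^n = of_nat (m choose i) * (Z - X)^i * (X - W)^(m + n - i)"
      by (simp only: power_add mult.assoc)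
  qed simp
  finally show ?thesis .
qed

lemma poly3_T2: "(\<Sum>i\<le>m. of_nat (m choose i) * (M3 1 0 0 - M3 0 1 0)^i * (M3 0 1 0 - M3 0 0 1)^(m+n-i)) * M3 0 0 k =
  (\<Sum>i\<le>m. \<Sum>j\<le>i. \<Sum>r\<le>m+n-i. Poly_Mapping.single (int i - int j, int j + int (m+n-i) - int r, k + int r) (of_int (int (m choose i) * cf i j * cf (m+n-i) r)))"
proof -
  have "(\<Sum>i\<le>m. of_nat (m choose i) * (M3 1 0 0 - M3 0 1 0)^i * (M3 0 1 0 - M3 0 0 1)^(m+n-i)) * M3 0 0 k =
    (\<Sum>i\<le>m. \<Sum>j\<le>i. \<Sum>r\<le>m+n-i. of_nat (m choose i) * (of_int (cf i j) * (M3 1 0 0 ^ (i-j) * M3 0 1 0 ^ j)) * (of_int (cf (m+n-i) r) * (M3 0 1 0 ^ (m+n-i-r) * M3 0 0 1 ^ r)) * M3 0 0 k)"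
    unfolding binom_diff_cf sum_distrib_right
    by (intro sum.cong refl) (simp only: sum_distrib_left sum_product sum_distrib_right, rule sum.swap)
  also have "\<dots> = (\<Sum>i\<le>m. \<Sum>j\<le>i. \<Sum>r\<le>m+n-i. Poly_Mapping.single (int i - int j, int j + int (m+n-i) - int r, k + int r) (of_int (int (m choose i) * cf i j * cf (m+n-i) r)))"
    by (intro sum.cong refl) (simp add: single_pow3 mult_single of_nat_diff algebra_simps flip: single_of_int single_of_nat)
  finally show ?thesis .
qed

lemma pm_expand_lookup: "Poly_Mapping.lookup Q x = Poly_Mapping.lookup (\<Sum>\<kappa>\<in>Poly_Mapping.keys Q. Poly_Mapping.single \<kappa> (Poly_Mapping.lookup Q \<kappa>)) x"
  unfolding lookup_sum lookup_single
  apply (simp only: when_def)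
  apply (subst sum.delta)
  apply simp
  apply (simp add: not_in_keys_iff_lookup_eq_zero)
  done

lemma pm_expand: "Q = (\<Sum>\<kappa>\<in>Poly_Mapping.keys Q. Poly_Mapping.single \<kappa> (Poly_Mapping.lookup Q \<kappa>))"
  by (rule poly_mapping_eqI, rule pm_expand_lookup)

lemma poly_W2_Z2_pow: "((W::'r::comm_ring_1) - Z)^J = (-1)^J * (Z - W)^J"
proof -
  have "(W - Z)^J = (- (Z - W))^J" by simp
  also have "\<dots> = (-1)^J * (Z - W)^J" by (rule power_minus)
  finally show ?thesis .
qed

locale HL =
  fixes s :: "complex \<Rightarrow> 'a::ab_group_add \<Rightarrow> 'a" and br :: "'a \<Rightarrow> 'a \<Rightarrow> 'a" and al :: "'a \<Rightarrow> 'a"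
  assumes hl: "hom_lie s br al"
begin

sublocale vector_space s by (rule hl[unfolded hom_lie_def, THEN conjunct1])

lemma lin2: "Vector_Spaces.linear s s (br x)" by (rule hl[unfolded hom_lie_def, THEN conjunct2, THEN conjunct1, rule_format])
lemma lin1: "Vector_Spaces.linear s s (\<lambda>x. br x y)" by (rule hl[unfolded hom_lie_def, THEN conjunct2, THEN conjunct2, THEN conjunct1, rule_format])
lemma skew: "br x y = - br y x" by (rule hl[unfolded hom_lie_def, THEN conjunct2, THEN conjunct2, THEN conjunct2, THEN conjunct2, THEN conjunct1, rule_format])
lemma jac: "br (br x y) (al z) + br (br y z) (al x) + br (br z x) (al y) = 0"
  by (rule hl[unfolded hom_lie_def, THEN conjunct2, THEN conjunct2, THEN conjunct2, THEN conjunct2, THEN conjunct2, rule_format])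

lemma br_add2: "br x (y + z) = br x y + br x z"
proof - interpret Vector_Spaces.linear s s "br x" by (rule lin2) show ?thesis by (rule add) qed
lemma br_scale2: "br x (s c y) = s c (br x y)"
proof - interpret Vector_Spaces.linear s s "br x" by (rule lin2) show ?thesis by (rule scale) qed
lemma br_sum2: "br x (sum f A) = (\<Sum>i\<in>A. br x (f i))"
proof - interpret Vector_Spaces.linear s s "br x" by (rule lin2) show ?thesis by (rule sum) qed
lemma br_minus2: "br x (- y) = - br x y"
proof - interpret Vector_Spaces.linear s s "br x" by (rule lin2) show ?thesis by (rule neg) qed
lemma br_add1: "br (x + y) z = br x z + br y z"
proof - interpret Vector_Spaces.linear s s "\<lambda>x. br x z" by (rule lin1) show ?thesis by (rule add) qed
lemma br_scale1: "br (s c x) y = s c (br x y)"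
proof - interpret Vector_Spaces.linear s s "\<lambda>x. br x y" by (rule lin1) show ?thesis by (rule scale) qed
lemma br_sum1: "br (sum f A) y = (\<Sum>i\<in>A. br (f i) y)"
proof - interpret Vector_Spaces.linear s s "\<lambda>x. br x y" by (rule lin1) show ?thesis by (rule sum) qed
lemma br_minus1: "br (- x) y = - br x y"
proof - interpret Vector_Spaces.linear s s "\<lambda>x. br x y" by (rule lin1) show ?thesis by (rule neg) qed

lemma br_zero1[simp]: "br 0 y = 0"
proof - interpret Vector_Spaces.linear s s "\<lambda>x. br x y" by (rule lin1) show ?thesis by (rule zero) qed
lemma br_zero2[simp]: "br x 0 = 0"
proof - interpret Vector_Spaces.linear s s "br x" by (rule lin2) show ?thesis by (rule zero) qed

lemmas brl = br_add2 br_scale2 br_sum2 br_minus2 br_add1 br_scale1 br_sum1 br_minus1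

lemma s_sum_right: "s c (sum f A) = (\<Sum>i\<in>A. s c (f i))"
  by (rule scale_sum_right)
lemma s_sum_left: "s (sum f A) x = (\<Sum>i\<in>A. s (f i) x)"
  by (rule scale_sum_left)

lemma ev_superset: "finite A \<Longrightarrow> Poly_Mapping.keys P \<subseteq> A \<Longrightarrow>
   ev s P G = (\<Sum>k\<in>A. s (Poly_Mapping.lookup P k) (G k))"
  unfolding ev_def
  by (rule sum.mono_neutral_left) (auto simp: in_keys_iff)

lemma ev_add: "ev s (P + Q) G = ev s P G + ev s Q G"
proof -
  let ?A = "Poly_Mapping.keys P \<union> Poly_Mapping.keys Q"
  have "ev s (P + Q) G = (\<Sum>k\<in>?A. s (Poly_Mapping.lookup (P+Q) k) (G k))"
    by (rule ev_superset) (auto simp: keys_add)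
  also have "\<dots> = ev s P G + ev s Q G"
    by (simp add: ev_superset[of ?A P] ev_superset[of ?A Q] lookup_add scale_left_distrib sum.distrib)
  finally show ?thesis .
qed

lemma ev_zero[simp]: "ev s 0 G = 0" by (simp add: ev_def)

lemma ev_sum: "ev s (sum f A) G = (\<Sum>i\<in>A. ev s (f i) G)"
  by (induction A rule: infinite_finite_induct) (auto simp: ev_add)

lemma ev_single[simp]: "ev s (Poly_Mapping.single k c) G = s c (G k)"
  by (simp add: ev_def)

lemma ev_scale: "ev s (Poly_Mapping.single 0 c * P) G = s c (ev s P G)"
proof -
  have "ev s (Poly_Mapping.single 0 c * P) G = (\<Sum>k\<in>Poly_Mapping.keys P. s (c * Poly_Mapping.lookup P k) (G k))"
    unfolding mult_map_scale_conv_mult[symmetric]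
    by (subst ev_superset[of "Poly_Mapping.keys P"]) (auto simp: map.rep_eq in_keys_iff when_def)
  also have "\<dots> = s c (ev s P G)"
    by (simp add: ev_def s_sum_right)
  finally show ?thesis .
qed

lemma ev_uminus: "ev s (- P) G = - ev s P G"
proof -
  have "ev s (- P) G + ev s P G = 0" by (simp flip: ev_add)
  then show ?thesis by (simp add: eq_neg_iff_add_eq_0)
qed

lemma ev_diff: "ev s (P - Q) G = ev s P G - ev s Q G"
  by (simp add: diff_conv_add_uminus ev_add ev_uminus del: add_uminus_conv_diff)

lemma ev_of_int: "ev s (of_int c * P) G = s (of_int c) (ev s P G)"
  by (metis ev_scale single_of_int)
lemma ev_of_nat: "ev s (of_nat c * P) G = s (of_nat c) (ev s P G)"
  by (metis ev_scale single_of_nat)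


lemma zw_ev: "zw_mult s N F m n = ev s ((Z2 - W2)^N * M2 m n) (\<lambda>(u,v). F u v)"
proof -
  have "(Z2 - W2)^N * M2 m n = (\<Sum>k\<le>N. of_int (cf N k) * M2 (m + int N - int k) (n + int k))"
    by (simp add: binom_diff_cf sum_distrib_right single_pow2 mult_single mult.assoc of_nat_diff add_ac add_diff_eq)
  then show ?thesis
    by (simp add: zw_mult_def ev_sum ev_of_int cf_def[symmetric])
qed

lemma part1a: "jprod s br n (dderiv s a) b k = - s (of_nat n) (jprod s br (n - 1) a b k)"
proof (cases n)
  case 0 then show ?thesis by (simp add: jprod_def zw_mult_def bracket2_def dderiv_def br_scale1)
next
  case (Suc n')
  have "jprod s br n (dderiv s a) b k = (\<Sum>j\<le>Suc n'. s (of_int (cf n j)) (br (s (of_int (-(int n - int j))) (a (int n - int j - 1))) (b (k + int j))))"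
    unfolding jprod_def zw_mult_def bracket2_def dderiv_def cf_def[symmetric] Suc by simp
  also have "\<dots> = (\<Sum>j\<le>n'. s (of_int (cf n j)) (br (s (of_int (-(int n - int j))) (a (int n - int j - 1))) (b (k + int j))))"
    by (simp add: Suc)
  also have "\<dots> = (\<Sum>j\<le>n'. s (of_int (cf n j) * of_int (-(int n - int j))) (br (a (int n' - int j)) (b (k + int j))))"
    by (rule sum.cong) (simp_all add: br_scale1 scale_scale Suc)
  also have "\<dots> = (\<Sum>j\<le>n'. - s (of_nat n) (s (of_int (cf n' j)) (br (a (int n' - int j)) (b (k + int j)))))"
  proof (rule sum.cong)
    fix j assume "j \<in> {..n'}"
    then have "j \<le> n'" by simp
    from arg_cong[OF cf_absorb[OF this], of "of_int :: int \<Rightarrow> complex"]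
    have h: "of_int (cf n j) * (of_nat n - of_nat j) = (of_nat n * of_int (cf n' j) :: complex)"
      using Suc by (simp only: of_int_mult of_int_diff of_int_of_nat_eq)
    have "of_int (cf n j) * of_int (-(int n - int j)) = - (of_nat n * of_int (cf n' j) :: complex)"
      by (simp only: of_int_minus of_int_diff of_int_of_nat_eq mult_minus_right h)
    then show "s (of_int (cf n j) * of_int (-(int n - int j))) (br (a (int n' - int j)) (b (k + int j))) =
       - s (of_nat n) (s (of_int (cf n' j)) (br (a (int n' - int j)) (b (k + int j))))"
      by (simp add: scale_scale)
  qed simp
  also have "\<dots> = - s (of_nat n) (jprod s br (n-1) a b k)"
    unfolding jprod_def zw_mult_def bracket2_def cf_def[symmetric] Suc by (simp add: s_sum_right sum_negf)
  finally show ?thesis .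
qed

lemma part1b: "jprod s br n a (dderiv s b) k = dderiv s (jprod s br n a b) k + s (of_nat n) (jprod s br (n - 1) a b k)"
proof -
  define G where "G j = br (a (int n - int j)) (b (k + int j - 1))" for j
  have "jprod s br n a (dderiv s b) k = (\<Sum>j\<le>n. s (of_int (cf n j) * of_int (- k)) (G j) + s (of_int (cf n j) * of_int (- int j)) (G j))"
    unfolding jprod_def zw_mult_def bracket2_def dderiv_def cf_def[symmetric] G_def
    by (rule sum.cong) (simp_all only: add_0_left br_scale2 scale_scale minus_add_distrib of_int_add distrib_left scale_left_distrib br_add2 scale_right_distrib)
  also have "\<dots> = dderiv s (jprod s br n a b) k + (\<Sum>j\<le>n. s (of_int (cf n j) * of_int (- int j)) (G j))"
    unfolding sum.distrib
    unfolding jprod_def zw_mult_def bracket2_def dderiv_def cf_def[symmetric] G_def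
    by (simp add: s_sum_right scale_scale algebra_simps)
  also have "(\<Sum>j\<le>n. s (of_int (cf n j) * of_int (- int j)) (G j)) = s (of_nat n) (jprod s br (n - 1) a b k)"
  proof (cases n)
    case 0 then show ?thesis by simp
  next
    case (Suc n')
    have "(\<Sum>j\<le>n. s (of_int (cf n j) * of_int (- int j)) (G j)) = (\<Sum>i\<le>n'. s (of_int (cf n (Suc i) * (- int (Suc i)))) (G (Suc i)))"
      unfolding Suc sum.atMost_Suc_shift by simp
    also have "\<dots> = (\<Sum>i\<le>n'. s (of_nat n) (s (of_int (cf n' i)) (br (a (int n' - int i)) (b (k + int i)))))"
      by (rule sum.cong) (simp_all only: cf_shift scale_scale G_def Suc, simp_all)
    also have "\<dots> = s (of_nat n) (jprod s br (n - 1) a b k)"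
      unfolding jprod_def zw_mult_def bracket2_def cf_def[symmetric] Suc by (simp add: s_sum_right)
    finally show ?thesis .
  qed
  finally show ?thesis .
qed

lemma jac2: "br (al x) (br y z) = br (br x y) (al z) + br (al y) (br x z)"
proof -
  have e1: "br (br y z) (al x) = - br (al x) (br y z)" by (rule skew)
  have e2: "br (br z x) (al y) = br (al y) (br x z)"
    using skew[of "br z x" "al y"] skew[of z x] br_minus2 by simp
  have e: "br (br x y) (al z) + - br (al x) (br y z) + br (al y) (br x z) = 0"
    using jac[of x y z] unfolding e1 e2 .
  have "br (al x) (br y z) = br (al x) (br y z) + (br (br x y) (al z) + - br (al x) (br y z) + br (al y) (br x z))"
    unfolding e by simp
  also have "\<dots> = br (br x y) (al z) + br (al y) (br x z)" by (simp add: algebra_simps)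
  finally show ?thesis .
qed

lemma part3_L: "jprod s br m (amap al a) (jprod s br n b c) k =
  (\<Sum>p\<le>m. \<Sum>q\<le>n. s (of_int (cf m p * cf n q)) (br (al (a (int m - int p))) (br (b (int n - int q)) (c (k + int p + int q)))))"
  unfolding jprod_def zw_mult_def bracket2_def amap_def cf_def[symmetric]
  by (simp add: br_sum2 s_sum_right br_scale2 scale_scale add.assoc)

lemma part3_R1: "jprod s br n (amap al b) (jprod s br m a c) k =
  (\<Sum>p\<le>m. \<Sum>q\<le>n. s (of_int (cf m p * cf n q)) (br (al (b (int n - int q))) (br (a (int m - int p)) (c (k + int p + int q)))))"
  unfolding jprod_def zw_mult_def bracket2_def amap_def cf_def[symmetric]
  by (subst sum.swap) (simp add: br_sum2 s_sum_right br_scale2 scale_scale algebra_simps)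

lemma part3_R2: "(\<Sum>i\<le>m. s (of_nat (m choose i)) (jprod s br (m + n - i) (jprod s br i a b) (amap al c) k)) =
  (\<Sum>i\<le>m. \<Sum>j\<le>i. \<Sum>r\<le>m+n-i. s (of_int (int (m choose i) * cf i j * cf (m+n-i) r)) (br (br (a (int i - int j)) (b (int j + int (m+n-i) - int r))) (al (c (k + int r)))))"
  unfolding jprod_def zw_mult_def bracket2_def amap_def cf_def[symmetric]
  apply (intro sum.cong refl)
  apply (subst sum.swap)
  apply (simp add: br_sum1 s_sum_right br_scale1 scale_scale algebra_simps)
  done

lemma part3: "jprod s br m (amap al a) (jprod s br n b c) k =
   jprod s br n (amap al b) (jprod s br m a c) k +
   (\<Sum>i\<le>m. s (of_nat (m choose i)) (jprod s br (m + n - i) (jprod s br i a b) (amap al c) k))"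
proof -
  define H where "H = (\<lambda>(u,v,t). br (br (a u) (b v)) (al (c t)))"
  have T1: "(\<Sum>p\<le>m. \<Sum>q\<le>n. s (of_int (cf m p * cf n q)) (br (br (a (int m - int p)) (b (int n - int q))) (al (c (k + int p + int q)))))
     = ev s ((M3 1 0 0 - M3 0 0 1)^m * (M3 0 1 0 - M3 0 0 1)^n * M3 0 0 k) H"
    unfolding poly3_T1 ev_sum ev_single H_def by simp
  have T2: "(\<Sum>i\<le>m. \<Sum>j\<le>i. \<Sum>r\<le>m+n-i. s (of_int (int (m choose i) * cf i j * cf (m+n-i) r)) (br (br (a (int i - int j)) (b (int j + int (m+n-i) - int r))) (al (c (k + int r)))))
     = ev s ((\<Sum>i\<le>m. of_nat (m choose i) * (M3 1 0 0 - M3 0 1 0)^i * (M3 0 1 0 - M3 0 0 1)^(m+n-i)) * M3 0 0 k) H"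
    unfolding poly3_T2 ev_sum ev_single H_def by simp
  have J: "\<And>u v w. br (al (a u)) (br (b v) (c w)) = br (br (a u) (b v)) (al (c w)) + br (al (b v)) (br (a u) (c w))"
    by (rule jac2)
  show ?thesis
    unfolding part3_L[where m=m and n=n and a=a and b=b and c=c] part3_R1[where m=m and n=n and a=a and b=b and c=c] part3_R2 J scale_right_distrib sum.distrib T1 T2 poly_id
    by (rule add.commute)
qed

lemma dd_pow: "(dderiv s ^^ i) g k = s ((-1)^i * fact i * ((of_int k :: complex) gchoose i)) (g (k - int i))"
proof (induction i arbitrary: k)
  case 0 then show ?case by simp
next
  case (Suc i)
  have ab: "of_nat (Suc i) * ((of_int k :: complex) gchoose Suc i) = of_int k * ((of_int k - 1) gchoose i)"
    by (rule gbinomial_absorption)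
  have "(dderiv s ^^ Suc i) g k = s (of_int (- k)) ((dderiv s ^^ i) g (k - 1))"
    by (simp add: dderiv_def)
  also have "\<dots> = s (of_int (- k) * ((-1)^i * fact i * ((of_int (k - 1) :: complex) gchoose i))) (g (k - int (Suc i)))"
    unfolding Suc.IH by (simp add: scale_scale algebra_simps)
  also have "of_int (- k) * ((-1)^i * fact i * ((of_int (k - 1) :: complex) gchoose i)) = (-1)^(Suc i) * fact (Suc i) * ((of_int k :: complex) gchoose (Suc i))"
  proof -
    have "(-1)^(Suc i) * fact (Suc i) * ((of_int k :: complex) gchoose (Suc i)) = - ((-1)^i * fact i * (of_nat (Suc i) * ((of_int k :: complex) gchoose Suc i)))"
      by (simp only: fact_Suc power_Suc of_nat_mult) (simp add: algebra_simps)
    also have "\<dots> = of_int (- k) * ((-1)^i * fact i * ((of_int (k - 1) :: complex) gchoose i))"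
      unfolding ab by simp
    finally show ?thesis by simp
  qed
  finally show ?case .
qed

lemma ev_D: "ev s ((W2 - Z2)^J * M2 q 0) F = (\<Sum>j\<le>J. s (of_int (cf J j)) (F (q + int j, int J - int j)))"
proof -
  have "(W2 - Z2)^J * M2 q 0 = (\<Sum>j\<le>J. of_int (cf J j) * M2 (q + int j) (int J - int j))"
    by (simp add: binom_diff_cf sum_distrib_right single_pow2 mult_single mult.assoc of_nat_diff add_ac add_diff_eq)
  then show ?thesis
    by (simp add: ev_sum ev_of_int)
qed

lemma loc_kill: assumes "\<And>u v. ev s ((Z2 - W2)^N * M2 u v) F = 0"
  shows "ev s ((Z2 - W2)^N * Q) F = 0"
proof -
  have "(Z2 - W2)^N * Q = (\<Sum>\<kappa>\<in>Poly_Mapping.keys Q. Poly_Mapping.single 0 (Poly_Mapping.lookup Q \<kappa>) * ((Z2 - W2)^N * Poly_Mapping.single \<kappa> 1))"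
  proof -
    have "(Z2 - W2)^N * Q = (\<Sum>\<kappa>\<in>Poly_Mapping.keys Q. (Z2 - W2)^N * Poly_Mapping.single \<kappa> (Poly_Mapping.lookup Q \<kappa>))"
      by (subst pm_expand) (simp only: sum_distrib_left)
    also have "\<dots> = (\<Sum>\<kappa>\<in>Poly_Mapping.keys Q. Poly_Mapping.single 0 (Poly_Mapping.lookup Q \<kappa>) * ((Z2 - W2)^N * Poly_Mapping.single \<kappa> 1))"
    proof (rule sum.cong[OF refl])
      fix \<kappa> :: "int \<times> int"
      have h: "Poly_Mapping.single \<kappa> (Poly_Mapping.lookup Q \<kappa>) = Poly_Mapping.single 0 (Poly_Mapping.lookup Q \<kappa>) * Poly_Mapping.single \<kappa> 1"
        by (simp add: mult_single)
      show "(Z2 - W2)^N * Poly_Mapping.single \<kappa> (Poly_Mapping.lookup Q \<kappa>) = Poly_Mapping.single 0 (Poly_Mapping.lookup Q \<kappa>) * ((Z2 - W2)^N * Poly_Mapping.single \<kappa> 1)"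
        by (subst h) (rule mult.left_commute)
    qed
    finally show ?thesis .
  qed
  also have "ev s \<dots> F = 0"
    unfolding ev_sum ev_scale
  proof (intro sum.neutral ballI)
    fix \<kappa> :: "int \<times> int"
    obtain u v where "\<kappa> = (u, v)" by (cases \<kappa>)
    then show "s (Poly_Mapping.lookup Q \<kappa>) (ev s ((Z2 - W2)^N * Poly_Mapping.single \<kappa> 1) F) = 0"
      using assms[of u v] by (simp only: scale_zero_right)
  qed
  finally show ?thesis .
qed

lemma part2:
  assumes loc: "local_pair s br a b"
  shows "jprod s br n a b k = - Sum_any (\<lambda>i::nat. s ((-1) ^ (n + i) / fact i) ((dderiv s ^^ i) (jprod s br (n + i) b a) k))"
proof -
  from loc obtain N where N0: "N > 0" and N: "zw_mult s N (bracket2 br a b) = (\<lambda>m n. 0)"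
    unfolding local_pair_def by blast
  define F where "F = (\<lambda>(u,v). bracket2 br a b u v)"
  define D where "D = W2 - Z2"
  have base: "ev s ((Z2 - W2)^N * M2 u v) F = 0" for u v
    using zw_ev[of N "bracket2 br a b" u v] N unfolding F_def by simp
  have kill: "ev s ((Z2 - W2)^J * Q) F = 0" if "J \<ge> N" for J Q
  proof -
    have "(Z2 - W2)^J * Q = (Z2 - W2)^N * ((Z2 - W2)^(J - N) * Q)"
    proof -
      have "(Z2 - W2)^J = (Z2 - W2)^N * (Z2 - W2)^(J - N)"
        using that by (metis le_add_diff_inverse power_add)
      then show ?thesis by (simp only: mult.assoc)
    qed
    then show ?thesis using loc_kill[OF base] by simp
  qed
  have killD: "ev s (D^J * Q) F = 0" if "J \<ge> N" for J Q
  proof -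
    have "D^J * Q = (Z2 - W2)^J * ((-1)^J * Q)"
      unfolding D_def poly_W2_Z2_pow[of W2 Z2] by (simp only: mult_ac)
    then show ?thesis using kill[OF that] by simp
  qed
  define P where "P i = Poly_Mapping.single 0 ((-1)^n * ((of_int k :: complex) gchoose i)) * D^(n+i) * M2 (k - int i) 0" for i
  have jp: "jprod s br J b a q = - ev s (D^J * M2 q 0) F" for J q
  proof -
    have "jprod s br J b a q = (\<Sum>j\<le>J. s (of_int (cf J j)) (br (b (int J - int j)) (a (q + int j))))"
      unfolding jprod_def zw_mult_def bracket2_def cf_def[symmetric] by simp
    also have "\<dots> = - (\<Sum>j\<le>J. s (of_int (cf J j)) (F (q + int j, int J - int j)))"
      unfolding F_def bracket2_def sum_negf[symmetric] scale_minus_right[symmetric]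
      by (intro sum.cong refl) (simp only: skew[of "b _" "a _"] prod.case)
    also have "\<dots> = - ev s (D^J * M2 q 0) F"
      unfolding D_def ev_D ..
    finally show ?thesis .
  qed
  have termi: "s ((-1) ^ (n + i) / fact i) ((dderiv s ^^ i) (jprod s br (n + i) b a) k) = - ev s (P i) F" for i
  proof -
    have m1: "(-1)^i * (-1)^i = (1::complex)"
      by (simp flip: power_mult_distrib)
    have fi: "fact i / fact i = (1::complex)" by simp
    have c: "((-1) ^ (n + i) / fact i) * ((-1)^i * fact i * ((of_int k :: complex) gchoose i)) = (-1)^n * ((of_int k :: complex) gchoose i)"
    proof -
      have "((-1) ^ (n + i) / fact i) * ((-1)^i * fact i * ((of_int k :: complex) gchoose i)) = (-1)^n * ((-1)^i * (-1)^i) * ((of_int k :: complex) gchoose i)"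
        by (simp add: power_add field_simps)
      then show ?thesis unfolding m1 by simp
    qed
    have "s ((-1) ^ (n + i) / fact i) ((dderiv s ^^ i) (jprod s br (n + i) b a) k)
        = s ((-1)^n * ((of_int k :: complex) gchoose i)) (jprod s br (n + i) b a (k - int i))"
      unfolding dd_pow scale_scale c ..
    also have "\<dots> = - ev s (P i) F"
      unfolding jp P_def mult.assoc ev_scale scale_minus_right ..
    finally show ?thesis .
  qed
  have vanish: "ev s (P i) F = 0" if "i \<ge> N" for i
  proof -
    have "P i = D^(n+i) * (Poly_Mapping.single 0 ((-1)^n * ((of_int k :: complex) gchoose i)) * M2 (k - int i) 0)"
      unfolding P_def by (simp only: mult_ac)
    then show ?thesis using killD[of "n + i"] that by simp
  qed
  obtain R where R: "M2 0 k - Sg N k = D^N * R"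
    using taylor[of k N] unfolding D_def by blast
  have SgR: "Sg N k = M2 0 k - D^N * R" by (simp add: R[symmetric])
  have s0m: "Poly_Mapping.single 0 (x * y) = Poly_Mapping.single 0 x * Poly_Mapping.single (0::int\<times>int) (y::complex)" for x y
    by (simp add: mult_single)
  have sg: "Poly_Mapping.single 0 ((-1)^n :: complex) = ((-1)^n :: (int \<times> int) \<Rightarrow>\<^sub>0 complex)"
    by (induction n) (simp_all add: s0m single_uminus)
  have h: "Poly_Mapping.single 0 ((-1)^n) * D^n = (Z2 - W2)^n"
  proof -
    have "Poly_Mapping.single 0 ((-1)^n) * D^n = ((-1) * (-1))^n * (Z2 - W2)^n"
      unfolding sg D_def poly_W2_Z2_pow[of W2 Z2] power_mult_distrib by (simp only: mult_ac)
    then show ?thesis by simp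
  qed
  have "Sum_any (\<lambda>i::nat. s ((-1) ^ (n + i) / fact i) ((dderiv s ^^ i) (jprod s br (n + i) b a) k))
      = (\<Sum>i<N. - ev s (P i) F)"
    unfolding termi
    by (rule Sum_any.expand_superset) (auto intro: ccontr dest: vanish[OF leI])
  then have "- Sum_any (\<lambda>i::nat. s ((-1) ^ (n + i) / fact i) ((dderiv s ^^ i) (jprod s br (n + i) b a) k))
      = ev s (\<Sum>i<N. P i) F"
    by (simp add: sum_negf ev_sum)
  also have "(\<Sum>i<N. P i) = Poly_Mapping.single 0 ((-1)^n) * D^n * Sg N k"
    unfolding Sg_def P_def sum_distrib_left D_def[symmetric]
    by (intro sum.cong refl) (simp only: s0m power_add mult_ac)
  also have "\<dots> = (Poly_Mapping.single 0 ((-1)^n) * D^n) * M2 0 k - D^(n + N) * (Poly_Mapping.single 0 ((-1)^n) * R)"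
    unfolding SgR by (simp only: right_diff_distrib power_add mult_ac)
  also have "\<dots> = (Z2 - W2)^n * M2 0 k - D^(n + N) * (Poly_Mapping.single 0 ((-1)^n) * R)"
    unfolding h ..
  also have "ev s \<dots> F = jprod s br n a b k"
    unfolding ev_diff killD[OF le_add2] by (simp add: jprod_def zw_ev F_def)
  finally show ?thesis by simp
qed

end

theorem proposition4p7:
  fixes s :: "complex \<Rightarrow> 'a::ab_group_add \<Rightarrow> 'a"
    and br :: "'a \<Rightarrow> 'a \<Rightarrow> 'a" and al :: "'a \<Rightarrow> 'a"
    and a b c :: "int \<Rightarrow> 'a" and m n :: nat
  assumes "hom_lie s br al"
  shows "jprod s br n (dderiv s a) b = (\<lambda>k. - s (of_nat n) (jprod s br (n - 1) a b k)) \<and>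
         jprod s br n a (dderiv s b) =
           (\<lambda>k. dderiv s (jprod s br n a b) k + s (of_nat n) (jprod s br (n - 1) a b k)) \<and>
         (local_pair s br a b \<longrightarrow>
           jprod s br n a b =
           (\<lambda>k. - Sum_any (\<lambda>i::nat. s ((-1) ^ (n + i) / fact i)
                                     ((dderiv s ^^ i) (jprod s br (n + i) b a) k)))) \<and>
         jprod s br m (amap al a) (jprod s br n b c) =
           (\<lambda>k. jprod s br n (amap al b) (jprod s br m a c) k +
                (\<Sum>i\<le>m. s (of_nat (m choose i)) (jprod s br (m + n - i) (jprod s br i a b) (amap al c) k)))"
proof -
  interpret HL s br al by unfold_locales (rule assms)
  show ?thesis
    by (intro conjI impI ext part1a part1b part2 part3)
qed

end
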